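(* Let $S_1,S_2\subseteq\mathbb N$ be numerical semigroups, $S=S_1\times S_2\subseteq\mathbb N^2$, and $\boldsymbol\omega=(w_1,w_2)\in S$ with $w_1,w_2>0$. Write $\mathrm{Ap}(S_1,w_1)=\{u_1<u_2<\dots<u_{w_1}\}$ and $\mathrm{Ap}(S_2,w_2)=\{v_1<\dots<v_{w_2}\}$, and set formally $u_{w_1+1}=v_{w_2+1}=\infty$. Then the levels of $\mathrm{Ap}(S,\boldsymbol\omega)=S\setminus(\boldsymbol\omega+S)$ are $A_1,\dots,A_{w_1+w_2}$, where $A_1=\{(0,0)\}$ and, for $2\le k\le w_1+w_2$, $$A_k=\bigcup_{\substack{1\le i\le w_1,\ 1\le j\le w_2\\ i+j=k}}\Big(\{(u_i,b): b\in S_2,\ v_j<b\le v_{j+1}\}\cup\{(a,v_j): a\in S_1,\ u_i<a\le u_{i+1}\}\Big).$$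
   Context: For a numerical semigroup $T$ and $w\in T$, $\mathrm{Ap}(T,w)=T\setminus(w+T)$, a set with $w$ elements. $S=S_1\times S_2$ is a (non-local) good semigroup and $\boldsymbol\omega+S$ is a good ideal of it. Notation: $\le$ componentwise on $\mathbb Z^2$, $\boldsymbol\alpha\ll\boldsymbol\beta$ means both coordinates strictly smaller, $\boldsymbol\alpha\le\le\boldsymbol\beta$ means $\boldsymbol\alpha=\boldsymbol\beta$ or $\boldsymbol\alpha\ll\boldsymbol\beta$, $\wedge$ componentwise minimum, $\Delta^S_i(\boldsymbol\alpha)=\{\boldsymbol\beta\in S:\beta_i=\alpha_i,\ \beta_j>\alpha_j\ (j\neq i)\}$. Levels of $A=\mathrm{Ap}(S,\boldsymbol\omega)$: $\boldsymbol\alpha\in B$ is a complete infimum of $\boldsymbol\beta^{(1)},\boldsymbol\beta^{(2)}\in B$ if, up to order, $\boldsymbol\beta^{(1)}\in\Delta^S_1(\boldsymbol\alpha)$ and $\boldsymbol\beta^{(2)}\in\Delta^S_2(\boldsymbol\alpha)$. $B^{(1)}$ = maximal elements of $A$ for $\le\le$, $C^{(1)}$ = those that are complete infima of two elements of $B^{(1)}$, $D^{(1)}=B^{(1)}\setminus C^{(1)}$; inductively $B^{(i)}$ = maximal elements for $\le\le$ of $A\setminus\bigcup_{j<i}D^{(j)}$, $C^{(i)},D^{(i)}$ likewise; $A=\bigsqcup_{i=1}^ND^{(i)}$ and the levels are $A_i=D^{(N+1-i)}$. *)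

theory Defs
  imports Main
begin

definition numerical_semigroup :: "nat set \<Rightarrow> bool" where
  "numerical_semigroup T \<longleftrightarrow> 0 \<in> T \<and> (\<forall>a\<in>T. \<forall>b\<in>T. a + b \<in> T) \<and> finite (UNIV - T)"

definition apery :: "nat set \<Rightarrow> nat \<Rightarrow> nat set" where
  "apery T w = T - (\<lambda>t. w + t) ` T"

definition apery2 :: "(nat \<times> nat) set \<Rightarrow> nat \<times> nat \<Rightarrow> (nat \<times> nat) set" where
  "apery2 S \<omega> = S - (\<lambda>t. (fst \<omega> + fst t, snd \<omega> + snd t)) ` S"

definition sll :: "nat \<times> nat \<Rightarrow> nat \<times> nat \<Rightarrow> bool" where
  "sll \<alpha> \<beta> \<longleftrightarrow> fst \<alpha> < fst \<beta> \<and> snd \<alpha> < snd \<beta>"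

definition slle :: "nat \<times> nat \<Rightarrow> nat \<times> nat \<Rightarrow> bool" where
  "slle \<alpha> \<beta> \<longleftrightarrow> \<alpha> = \<beta> \<or> sll \<alpha> \<beta>"

definition maxel :: "(nat \<times> nat) set \<Rightarrow> (nat \<times> nat) set" where
  "maxel X = {x \<in> X. \<forall>y\<in>X. slle x y \<longrightarrow> y = x}"

definition Delta1 :: "(nat \<times> nat) set \<Rightarrow> nat \<times> nat \<Rightarrow> (nat \<times> nat) set" where
  "Delta1 S \<alpha> = {\<beta> \<in> S. fst \<beta> = fst \<alpha> \<and> snd \<beta> > snd \<alpha>}"

definition Delta2 :: "(nat \<times> nat) set \<Rightarrow> nat \<times> nat \<Rightarrow> (nat \<times> nat) set" where
  "Delta2 S \<alpha> = {\<beta> \<in> S. snd \<beta> = snd \<alpha> \<and> fst \<beta> > fst \<alpha>}"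

definition complete_inf :: "(nat \<times> nat) set \<Rightarrow> (nat \<times> nat) set \<Rightarrow> nat \<times> nat \<Rightarrow> bool" where
  "complete_inf S B \<alpha> \<longleftrightarrow> \<alpha> \<in> B \<and>
     (\<exists>\<beta>1\<in>B. \<exists>\<beta>2\<in>B. (\<beta>1 \<in> Delta1 S \<alpha> \<and> \<beta>2 \<in> Delta2 S \<alpha>) \<or> (\<beta>1 \<in> Delta2 S \<alpha> \<and> \<beta>2 \<in> Delta1 S \<alpha>))"

definition Cset :: "(nat \<times> nat) set \<Rightarrow> (nat \<times> nat) set \<Rightarrow> (nat \<times> nat) set" where
  "Cset S X = {\<alpha> \<in> maxel X. complete_inf S (maxel X) \<alpha>}"

definition Dset :: "(nat \<times> nat) set \<Rightarrow> (nat \<times> nat) set \<Rightarrow> (nat \<times> nat) set" where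
  "Dset S X = maxel X - Cset S X"

fun rem :: "(nat \<times> nat) set \<Rightarrow> (nat \<times> nat) set \<Rightarrow> nat \<Rightarrow> (nat \<times> nat) set" where
  "rem S A 0 = A"
| "rem S A (Suc n) = rem S A n - Dset S (rem S A n)"

text \<open>Dlev S A n is D^(n+1) in the paper's 1-based indexing.\<close>
definition Dlev :: "(nat \<times> nat) set \<Rightarrow> (nat \<times> nat) set \<Rightarrow> nat \<Rightarrow> (nat \<times> nat) set" where
  "Dlev S A n = Dset S (rem S A n)"

end

theory Submission
  imports Defs
begin

definition cnt :: "(nat \<Rightarrow> nat) \<Rightarrow> nat \<Rightarrow> nat \<Rightarrow> nat" where
  "cnt f n a = card {i\<in>{1..n}. f i < a}"

context
  fixes f :: "nat \<Rightarrow> nat" and n :: nat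
  assumes sm: "strict_mono_on {1..n} f"
begin

lemma sm_less: "i \<in> {1..n} \<Longrightarrow> j \<in> {1..n} \<Longrightarrow> f i < f j \<longleftrightarrow> i < j"
  using strict_mono_on_less[OF sm] by blast

lemma sm_le: "i \<in> {1..n} \<Longrightarrow> j \<in> {1..n} \<Longrightarrow> f i \<le> f j \<longleftrightarrow> i \<le> j"
  using strict_mono_on_less_eq[OF sm] by blast

lemma sm_eq: "i \<in> {1..n} \<Longrightarrow> j \<in> {1..n} \<Longrightarrow> f i = f j \<longleftrightarrow> i = j"
  using strict_mono_on_eq[OF sm] by blast

lemma cnt_le: "cnt f n a \<le> n"
proof -
  have "card {i\<in>{1..n}. f i < a} \<le> card {1..n}" by (rule card_mono) auto
  then show ?thesis by (simp add: cnt_def)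
qed

lemma cnt_G1:
  assumes i: "i \<in> {1..n}" and lt: "f i < a" and up: "i < n \<longrightarrow> a \<le> f (i+1)"
  shows "cnt f n a = i"
proof -
  have "{i'\<in>{1..n}. f i' < a} = {1..i}"
  proof (rule set_eqI, rule iffI)
    fix x assume x: "x \<in> {i'\<in>{1..n}. f i' < a}"
    show "x \<in> {1..i}"
    proof (rule ccontr)
      assume "x \<notin> {1..i}"
      then have "i < x" "i < n" using x by auto
      then have "f (i+1) \<le> f x" using sm_le[of "i+1" x] x i by auto
      then show False using up x \<open>i<n\<close> by auto
    qed
  next
    fix x assume x: "x \<in> {1..i}"
    then have "f x \<le> f i" using sm_le[of x i] i by auto
    then show "x \<in> {i'\<in>{1..n}. f i' < a}" using x i lt by auto
  qed
  then show ?thesis by (simp add: cnt_def)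
qed

lemma cnt_G2:
  assumes i: "i \<in> {1..n}" shows "cnt f n (f i) = i - 1"
proof -
  have "{i'\<in>{1..n}. f i' < f i} = {1..i-1}"
    using sm_less[OF _ i] i by auto
  then show ?thesis by (simp add: cnt_def)
qed

lemma cnt_mono: "a \<le> a' \<Longrightarrow> cnt f n a \<le> cnt f n a'"
  unfolding cnt_def by (rule card_mono) auto

lemma cnt_strict:
  assumes "a < a'" "a \<in> f ` {1..n}" shows "cnt f n a < cnt f n a'"
proof -
  obtain i where i: "i \<in> {1..n}" "a = f i" using assms by auto
  have "{i'\<in>{1..n}. f i' < a} \<subset> {i'\<in>{1..n}. f i' < a'}"
  proof
    show "{i'\<in>{1..n}. f i' < a} \<subseteq> {i'\<in>{1..n}. f i' < a'}" using assms by auto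
    have "i \<in> {i'\<in>{1..n}. f i' < a'}" "i \<notin> {i'\<in>{1..n}. f i' < a}" using i assms by auto
    then show "{i'\<in>{1..n}. f i' < a} \<noteq> {i'\<in>{1..n}. f i' < a'}" by blast
  qed
  then show ?thesis unfolding cnt_def by (rule psubset_card_mono[rotated]) simp
qed

lemma cnt_next:
  assumes "a < t" and btw: "\<And>z. a < z \<Longrightarrow> z < t \<Longrightarrow> z \<notin> f ` {1..n}"
  shows "cnt f n t = cnt f n a + (if a \<in> f ` {1..n} then 1 else 0)"
proof -
  have e: "{i\<in>{1..n}. f i < t} = {i\<in>{1..n}. f i < a} \<union> {i\<in>{1..n}. f i = a}"
  proof (rule set_eqI)
    fix x
    show "x \<in> {i\<in>{1..n}. f i < t} \<longleftrightarrow> x \<in> {i\<in>{1..n}. f i < a} \<union> {i\<in>{1..n}. f i = a}"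
    proof
      assume x: "x \<in> {i\<in>{1..n}. f i < t}"
      have "\<not> (a < f x \<and> f x < t)" using btw[of "f x"] x by auto
      then show "x \<in> {i\<in>{1..n}. f i < a} \<union> {i\<in>{1..n}. f i = a}" using x by auto
    qed (use assms in auto)
  qed
  have d: "{i\<in>{1..n}. f i < a} \<inter> {i\<in>{1..n}. f i = a} = {}" by auto
  have c: "card {i\<in>{1..n}. f i = a} = (if a \<in> f ` {1..n} then 1 else 0)"
  proof (cases "a \<in> f ` {1..n}")
    case True
    then obtain i where i: "i \<in> {1..n}" "a = f i" by auto
    then have "{i\<in>{1..n}. f i = a} = {i}" using sm_eq[OF _ i(1)] by auto
    then show ?thesis using True by simp
  next
    case False
    then have "{i\<in>{1..n}. f i = a} = {}" by auto
    then show ?thesis using False by simp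
  qed
  show ?thesis unfolding cnt_def e
    by (subst card_Un_disjoint) (use d c in auto)
qed

lemma cnt_G6:
  assumes "cnt f n a \<ge> 1"
  shows "cnt f n a \<in> {1..n} \<and> f (cnt f n a) < a \<and> (cnt f n a < n \<longrightarrow> a \<le> f (cnt f n a + 1))"
proof -
  let ?D = "{i\<in>{1..n}. f i < a}"
  have ne: "?D \<noteq> {}"
  proof
    assume "?D = {}" then have "cnt f n a = 0" by (simp add: cnt_def)
    with assms show False by simp
  qed
  have fin: "finite ?D" by auto
  define j where "j = Max ?D"
  have j: "j \<in> ?D" using Max_in[OF fin ne] j_def by simp
  have up: "j < n \<longrightarrow> a \<le> f (j+1)"
  proof
    assume "j < n"
    show "a \<le> f (j+1)"
    proof (rule ccontr)
      assume "\<not> a \<le> f (j+1)"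
      then have "j+1 \<in> ?D" using \<open>j<n\<close> by auto
      then have "j+1 \<le> j" using Max_ge[OF fin] j_def by blast
      then show False by simp
    qed
  qed
  have "cnt f n a = j" using cnt_G1[of j a] j up by auto
  then show ?thesis using j up by auto
qed

lemma cnt_zero:
  assumes "n \<ge> 1" "f 1 = 0" "cnt f n a = 0" shows "a = 0"
proof (rule ccontr)
  assume "a \<noteq> 0"
  then have "1 \<in> {i\<in>{1..n}. f i < a}" using assms by auto
  then have "card {i\<in>{1..n}. f i < a} > 0" 
  proof -
    have fin: "finite {i\<in>{1..n}. f i < a}" by simp
    show ?thesis using card_gt_0_iff[of "{i\<in>{1..n}. f i < a}"] fin \<open>1 \<in> {i\<in>{1..n}. f i < a}\<close> by blast
  qed
  then show False using assms(3) unfolding cnt_def by linarith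
qed

lemma cnt_top_in:
  assumes "a \<in> f ` {1..n}" "\<And>z. z \<in> f ` {1..n} \<Longrightarrow> z \<le> a"
  shows "cnt f n a = n - 1"
proof -
  obtain i where i: "i \<in> {1..n}" "a = f i" using assms by auto
  have "i = n"
  proof (rule ccontr)
    assume "i \<noteq> n"
    then have "i + 1 \<in> {1..n}" using i by auto
    then have "f i < f (i+1)" using sm_less[OF i(1)] by auto
    moreover have "f (i+1) \<le> a" using assms(2) \<open>i + 1 \<in> {1..n}\<close> by auto
    ultimately show False using i by simp
  qed
  then show ?thesis using cnt_G2[OF i(1)] i by simp
qed

lemma cnt_all: "(\<And>i. i \<in> {1..n} \<Longrightarrow> f i < a) \<Longrightarrow> cnt f n a = n"
proof -
  assume "\<And>i. i \<in> {1..n} \<Longrightarrow> f i < a"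
  then have "{i\<in>{1..n}. f i < a} = {1..n}" by auto
  then show ?thesis by (simp add: cnt_def)
qed

lemma cnt_top_out:
  assumes "a \<notin> f ` {1..n}" "\<And>z. z \<in> f ` {1..n} \<Longrightarrow> z \<le> a"
  shows "cnt f n a = n"
proof (rule cnt_all)
  fix i assume "i \<in> {1..n}"
  then have "f i \<le> a" "f i \<noteq> a" using assms by auto
  then show "f i < a" by simp
qed

lemma cnt_img_le: "a \<in> f ` {1..n} \<Longrightarrow> cnt f n a \<le> n - 1"
  using cnt_G2 by auto

end

lemma ns_infinite: "numerical_semigroup T \<Longrightarrow> \<exists>t\<in>T. b < t"
proof -
  assume "numerical_semigroup T"
  then have "finite (UNIV - T)" by (simp add: numerical_semigroup_def)
  then have "infinite (UNIV - (UNIV - T))" using Diff_infinite_finite[of "UNIV - T" "UNIV::nat set"] by simp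
  then have "infinite T" by (simp add: Diff_Diff_Int)
  show ?thesis
  proof (rule ccontr)
    assume "\<not> (\<exists>t\<in>T. b < t)"
    then have "T \<subseteq> {..b}" by auto
    then show False using \<open>infinite T\<close> finite_subset by blast
  qed
qed

lemma next_ex:
  fixes X :: "nat set"
  assumes "c \<in> X" "a < c"
  shows "\<exists>t\<in>X. a < t \<and> (\<forall>z. a < z \<longrightarrow> z < t \<longrightarrow> z \<notin> X)"
proof -
  define t where "t = (LEAST z. z \<in> X \<and> a < z)"
  have t: "t \<in> X \<and> a < t" using LeastI[of "\<lambda>z. z \<in> X \<and> a < z" c] assms t_def by blast
  have "\<forall>z. a < z \<longrightarrow> z < t \<longrightarrow> z \<notin> X"
    using not_less_Least[of _ "\<lambda>z. z \<in> X \<and> a < z"] t_def by blast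
  then show ?thesis using t by blast
qed

lemma apery_facts:
  assumes ns: "numerical_semigroup T" and w: "w > 0"
    and sm: "strict_mono_on {1..w} f" and im: "f ` {1..w} = apery T w"
  shows "f ` {1..w} \<subseteq> T" "0 \<in> f ` {1..w}" "f 1 = 0"
proof -
  show "f ` {1..w} \<subseteq> T" using im by (auto simp: apery_def)
  have "0 \<in> T" using ns by (simp add: numerical_semigroup_def)
  then show z: "0 \<in> f ` {1..w}" using im w by (auto simp: apery_def)
  then obtain i where i: "i \<in> {1..w}" "f i = 0" by auto
  have "1 \<in> {1..w}" using w by auto
  then have "f 1 \<le> f i" using sm_le[OF sm, of 1 i] i by auto
  then show "f 1 = 0" using i by simp
qed

lemma apery2_char:
  "(a, b) \<in> apery2 (S1 \<times> S2) (w1, w2) \<longleftrightarrow>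
     a \<in> S1 \<and> b \<in> S2 \<and> (a \<in> apery S1 w1 \<or> b \<in> apery S2 w2)"
proof -
  have "(a, b) \<in> (\<lambda>t. (fst (w1,w2) + fst t, snd (w1,w2) + snd t)) ` (S1 \<times> S2) \<longleftrightarrow>
        a \<in> (\<lambda>t. w1 + t) ` S1 \<and> b \<in> (\<lambda>t. w2 + t) ` S2"
    by (auto simp: image_iff) 
  then show ?thesis unfolding apery2_def apery_def by auto
qed

locale setting =
  fixes S1 S2 :: "nat set" and w1 w2 :: nat and u v :: "nat \<Rightarrow> nat"
  assumes ns1: "numerical_semigroup S1" and ns2: "numerical_semigroup S2"
    and p1: "w1 > 0" and p2: "w2 > 0"
    and sm1: "strict_mono_on {1..w1} u" and im1: "u ` {1..w1} = apery S1 w1"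
    and sm2: "strict_mono_on {1..w2} v" and im2: "v ` {1..w2} = apery S2 w2"
begin

abbreviation "U \<equiv> u ` {1..w1}"
abbreviation "V \<equiv> v ` {1..w2}"
abbreviation "A \<equiv> apery2 (S1 \<times> S2) (w1, w2)"
abbreviation "SS \<equiv> S1 \<times> S2"

definition lev :: "nat \<times> nat \<Rightarrow> nat" where
  "lev x = 1 + cnt u w1 (fst x) + cnt v w2 (snd x)"

definition L :: "nat \<Rightarrow> (nat \<times> nat) set" where
  "L m = {x \<in> A. lev x \<le> m}"

lemma US1: "U \<subseteq> S1" and U0: "0 \<in> U" and u1: "u 1 = 0"
  using apery_facts[OF ns1 p1 sm1 im1] by auto

lemma VS2: "V \<subseteq> S2" and V0: "0 \<in> V" and v1: "v 1 = 0"
  using apery_facts[OF ns2 p2 sm2 im2] by auto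

lemma A_char: "(a, b) \<in> A \<longleftrightarrow> a \<in> S1 \<and> b \<in> S2 \<and> (a \<in> U \<or> b \<in> V)"
  using apery2_char[of a b S1 S2 w1 w2] im1 im2 by simp

lemma lev_less:
  assumes x: "x \<in> A" and s: "sll x y" shows "lev x < lev y"
proof -
  obtain a b where xab: "x = (a, b)" by (cases x)
  have lt: "a < fst y" "b < snd y" using s xab by (auto simp: sll_def)
  have "a \<in> U \<or> b \<in> V" using x xab A_char by simp
  then show ?thesis
  proof
    assume "a \<in> U"
    then have "cnt u w1 a < cnt u w1 (fst y)" using cnt_strict[OF sm1] lt by blast
    moreover have "cnt v w2 b \<le> cnt v w2 (snd y)" using cnt_mono[OF sm2] lt by simp
    ultimately show ?thesis by (simp add: lev_def xab)
  next
    assume "b \<in> V"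
    then have "cnt v w2 b < cnt v w2 (snd y)" using cnt_strict[OF sm2] lt by blast
    moreover have "cnt u w1 a \<le> cnt u w1 (fst y)" using cnt_mono[OF sm1] lt by simp
    ultimately show ?thesis by (simp add: lev_def xab)
  qed
qed

lemma lev_le_N: "x \<in> A \<Longrightarrow> lev x \<le> w1 + w2"
proof -
  assume x: "x \<in> A"
  obtain a b where xab: "x = (a, b)" by (cases x)
  have "a \<in> U \<or> b \<in> V" using x xab A_char by simp
  then show ?thesis
    using cnt_img_le[OF sm1, of a] cnt_img_le[OF sm2, of b] cnt_le[OF sm1, of a] cnt_le[OF sm2, of b]
      p1 p2 by (auto simp: lev_def xab)
qed

lemma next1: "\<exists>t\<in>S1. a < t \<and> (\<forall>z. a < z \<longrightarrow> z < t \<longrightarrow> z \<notin> U)"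
proof -
  obtain c where "c \<in> S1" "a < c" using ns_infinite[OF ns1] by blast
  then obtain t where "t \<in> S1" "a < t" "\<forall>z. a < z \<longrightarrow> z < t \<longrightarrow> z \<notin> S1" using next_ex by blast
  then show ?thesis using US1 by blast
qed

lemma next2: "\<exists>t\<in>S2. a < t \<and> (\<forall>z. a < z \<longrightarrow> z < t \<longrightarrow> z \<notin> V)"
proof -
  obtain c where "c \<in> S2" "a < c" using ns_infinite[OF ns2] by blast
  then obtain t where "t \<in> S2" "a < t" "\<forall>z. a < z \<longrightarrow> z < t \<longrightarrow> z \<notin> S2" using next_ex by blast
  then show ?thesis using VS2 by blast
qed

lemma dom1:
  assumes x: "(a, b) \<in> A" and c: "c \<in> U" "a < c"
  shows "\<exists>y\<in>A. sll (a, b) y \<and>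
     lev y = lev (a, b) + (if a \<in> U then 1 else 0) + (if b \<in> V then 1 else 0)"
proof -
  obtain t1 where t1: "t1 \<in> U" "a < t1" "\<forall>z. a < z \<longrightarrow> z < t1 \<longrightarrow> z \<notin> U"
    using next_ex[OF c] by blast
  obtain t2 where t2: "t2 \<in> S2" "b < t2" "\<forall>z. b < z \<longrightarrow> z < t2 \<longrightarrow> z \<notin> V"
    using next2 by blast
  have "(t1, t2) \<in> A" using A_char t1 t2 US1 by auto
  moreover have "sll (a, b) (t1, t2)" using t1 t2 by (simp add: sll_def)
  moreover have "cnt u w1 t1 = cnt u w1 a + (if a \<in> U then 1 else 0)"
    using cnt_next[OF sm1, of a t1] t1 by blast
  moreover have "cnt v w2 t2 = cnt v w2 b + (if b \<in> V then 1 else 0)"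
    using cnt_next[OF sm2, of b t2] t2 by blast
  ultimately show ?thesis by (intro bexI[of _ "(t1, t2)"]) (auto simp: lev_def)
qed

lemma dom2:
  assumes x: "(a, b) \<in> A" and c: "c \<in> V" "b < c"
  shows "\<exists>y\<in>A. sll (a, b) y \<and>
     lev y = lev (a, b) + (if a \<in> U then 1 else 0) + (if b \<in> V then 1 else 0)"
proof -
  obtain t2 where t2: "t2 \<in> V" "b < t2" "\<forall>z. b < z \<longrightarrow> z < t2 \<longrightarrow> z \<notin> V"
    using next_ex[OF c] by blast
  obtain t1 where t1: "t1 \<in> S1" "a < t1" "\<forall>z. a < z \<longrightarrow> z < t1 \<longrightarrow> z \<notin> U"
    using next1 by blast
  have "(t1, t2) \<in> A" using A_char t1 t2 VS2 by auto
  moreover have "sll (a, b) (t1, t2)" using t1 t2 by (simp add: sll_def)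
  moreover have "cnt u w1 t1 = cnt u w1 a + (if a \<in> U then 1 else 0)"
    using cnt_next[OF sm1, of a t1] t1 by blast
  moreover have "cnt v w2 t2 = cnt v w2 b + (if b \<in> V then 1 else 0)"
    using cnt_next[OF sm2, of b t2] t2 by blast
  ultimately show ?thesis by (intro bexI[of _ "(t1, t2)"]) (auto simp: lev_def)
qed

lemma maxel_char:
  assumes xm: "(a, b) \<in> maxel (L m)" and lt: "lev (a, b) < m" and mN: "m \<le> w1 + w2"
  shows "a \<in> U \<and> b \<in> V \<and> lev (a, b) + 1 = m"
proof -
  have x: "(a, b) \<in> A" using xm by (simp add: maxel_def L_def)
  have nod: "\<And>y. y \<in> A \<Longrightarrow> sll (a, b) y \<Longrightarrow> m < lev y"
  proof -
    fix y assume y: "y \<in> A" "sll (a, b) y"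
    have "y \<noteq> (a, b)" using y(2) by (auto simp: sll_def)
    then have "y \<notin> L m" using xm y(2) by (auto simp: maxel_def slle_def)
    then show "m < lev y" using y(1) by (auto simp: L_def)
  qed
  have e: "a \<in> U \<or> b \<in> V" using x A_char by simp
  show ?thesis
  proof (cases "\<exists>c\<in>U. a < c")
    case True
    then obtain c where "c \<in> U" "a < c" by blast
    from dom1[OF x this] obtain y where "y \<in> A" "sll (a, b) y"
      "lev y = lev (a, b) + (if a \<in> U then 1 else 0) + (if b \<in> V then 1 else 0)" by blast
    with nod[of y] lt e show ?thesis by (auto split: if_splits)
  next
    case F1: False
    show ?thesis
    proof (cases "\<exists>c\<in>V. b < c")
      case True
      then obtain c where "c \<in> V" "b < c" by blast
      from dom2[OF x this] obtain y where "y \<in> A" "sll (a, b) y"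
        "lev y = lev (a, b) + (if a \<in> U then 1 else 0) + (if b \<in> V then 1 else 0)" by blast
      with nod[of y] lt e show ?thesis by (auto split: if_splits)
    next
      case F2: False
      have ha: "\<And>z. z \<in> U \<Longrightarrow> z \<le> a" using F1 by (meson not_le)
      have hb: "\<And>z. z \<in> V \<Longrightarrow> z \<le> b" using F2 by (meson not_le)
      have ca: "cnt u w1 a = (if a \<in> U then w1 - 1 else w1)"
        using cnt_top_in[OF sm1, of a] cnt_top_out[OF sm1, of a] ha by auto
      have cb: "cnt v w2 b = (if b \<in> V then w2 - 1 else w2)"
        using cnt_top_in[OF sm2, of b] cnt_top_out[OF sm2, of b] hb by auto
      show ?thesis using ca cb lt mN e p1 p2 by (auto simp: lev_def split: if_splits)
    qed
  qed
qed

lemma lev_m_maxel: "y \<in> A \<Longrightarrow> lev y = m \<Longrightarrow> y \<in> maxel (L m)"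
  unfolding maxel_def L_def slle_def using lev_less by fastforce

lemma not_cinf:
  assumes x: "(a, b) \<in> A" "lev (a, b) = m"
    and b1: "\<beta> \<in> Delta1 SS (a, b)" "\<beta> \<in> L m"
    and b2: "\<gamma> \<in> Delta2 SS (a, b)" "\<gamma> \<in> L m"
  shows False
proof -
  obtain b' where b': "\<beta> = (a, b')" "b < b'" using b1 by (cases \<beta>) (auto simp: Delta1_def)
  obtain a' where a': "\<gamma> = (a', b)" "a < a'" using b2 by (cases \<gamma>) (auto simp: Delta2_def)
  have "a \<in> U \<or> b \<in> V" using x A_char by simp
  then show False
  proof
    assume "a \<in> U"
    then have "cnt u w1 a < cnt u w1 a'" using cnt_strict[OF sm1] a' by blast
    then have "lev \<gamma> > m" using x a' by (simp add: lev_def)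
    then show False using b2 by (simp add: L_def)
  next
    assume "b \<in> V"
    then have "cnt v w2 b < cnt v w2 b'" using cnt_strict[OF sm2] b' by blast
    then have "lev \<beta> > m" using x b' by (simp add: lev_def)
    then show False using b1 by (simp add: L_def)
  qed
qed

lemma Dset_eq:
  assumes m: "1 \<le> m" "m \<le> w1 + w2"
  shows "Dset SS (L m) = {x \<in> A. lev x = m}"
proof
  show "{x \<in> A. lev x = m} \<subseteq> Dset SS (L m)"
  proof
    fix x assume x: "x \<in> {x \<in> A. lev x = m}"
    obtain a b where xab: "x = (a, b)" by (cases x)
    have "x \<in> maxel (L m)" using lev_m_maxel x by blast
    moreover have "\<not> complete_inf SS (maxel (L m)) x"
    proof
      assume "complete_inf SS (maxel (L m)) x"
      then obtain \<beta>1 \<beta>2 where bb: "\<beta>1 \<in> maxel (L m)" "\<beta>2 \<in> maxel (L m)"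
        "(\<beta>1 \<in> Delta1 SS x \<and> \<beta>2 \<in> Delta2 SS x) \<or> (\<beta>1 \<in> Delta2 SS x \<and> \<beta>2 \<in> Delta1 SS x)"
        unfolding complete_inf_def by blast
      have "\<beta>1 \<in> L m" "\<beta>2 \<in> L m" using bb by (auto simp: maxel_def)
      then show False using bb(3) not_cinf[of a b m] x xab by blast
    qed
    ultimately show "x \<in> Dset SS (L m)" by (simp add: Dset_def Cset_def)
  qed
next
  show "Dset SS (L m) \<subseteq> {x \<in> A. lev x = m}"
  proof
    fix x assume xD: "x \<in> Dset SS (L m)"
    obtain a b where xab: "x = (a, b)" by (cases x)
    have xm: "x \<in> maxel (L m)" and nc: "\<not> complete_inf SS (maxel (L m)) x"
      using xD by (auto simp: Dset_def Cset_def)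
    have xA: "x \<in> A" and le: "lev x \<le> m" using xm by (auto simp: maxel_def L_def)
    have "lev x = m"
    proof (rule ccontr)
      assume "lev x \<noteq> m"
      then have lt: "lev (a, b) < m" using le xab by simp
      have mc: "a \<in> U \<and> b \<in> V \<and> lev (a, b) + 1 = m"
        using maxel_char[of a b m] xm xab lt m by simp
      have aS: "a \<in> S1" "b \<in> S2" using xA xab A_char by auto
      obtain t2 where t2: "t2 \<in> S2" "b < t2" "\<forall>z. b < z \<longrightarrow> z < t2 \<longrightarrow> z \<notin> V"
        using next2 by blast
      obtain t1 where t1: "t1 \<in> S1" "a < t1" "\<forall>z. a < z \<longrightarrow> z < t1 \<longrightarrow> z \<notin> U"
        using next1 by blast
      have c1: "cnt u w1 t1 = cnt u w1 a + 1"
        using cnt_next[OF sm1, of a t1] t1 mc by auto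
      have c2: "cnt v w2 t2 = cnt v w2 b + 1"
        using cnt_next[OF sm2, of b t2] t2 mc by auto
      have y1: "(a, t2) \<in> maxel (L m)"
        by (rule lev_m_maxel) (use A_char aS t2 mc c2 in \<open>auto simp: lev_def\<close>)
      have y2: "(t1, b) \<in> maxel (L m)"
        by (rule lev_m_maxel) (use A_char aS t1 mc c1 in \<open>auto simp: lev_def\<close>)
      have "(a, t2) \<in> Delta1 SS x" "(t1, b) \<in> Delta2 SS x"
        using aS t1 t2 xab by (auto simp: Delta1_def Delta2_def)
      then have "complete_inf SS (maxel (L m)) x"
        unfolding complete_inf_def using xm y1 y2 by blast
      then show False using nc by simp
    qed
    then show "x \<in> {x \<in> A. lev x = m}" using xA by simp
  qed
qed

lemma rem_eq: "n \<le> w1 + w2 \<Longrightarrow> rem SS A n = L (w1 + w2 - n)"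
proof (induction n)
  case 0
  then show ?case using lev_le_N by (auto simp: L_def)
next
  case (Suc n)
  then have IH: "rem SS A n = L (w1 + w2 - n)" by simp
  have "rem SS A (Suc n) = L (w1 + w2 - n) - Dset SS (L (w1 + w2 - n))" using IH by simp
  also have "\<dots> = L (w1 + w2 - n) - {x \<in> A. lev x = w1 + w2 - n}"
    using Dset_eq[of "w1 + w2 - n"] Suc.prems by simp
  also have "\<dots> = L (w1 + w2 - Suc n)" using Suc.prems by (auto simp: L_def)
  finally show ?case .
qed

lemma lev00: "(0, 0) \<in> A" "lev (0, 0) = 1"
  using A_char U0 V0 ns1 ns2 by (auto simp: numerical_semigroup_def lev_def cnt_def)

lemma lev1: "{x \<in> A. lev x = 1} = {(0, 0)}"
proof -
  have "\<And>a b. (a, b) \<in> A \<Longrightarrow> lev (a, b) = 1 \<Longrightarrow> a = 0 \<and> b = 0"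
  proof -
    fix a b assume "(a, b) \<in> A" "lev (a, b) = 1"
    then have "cnt u w1 a = 0" "cnt v w2 b = 0" by (auto simp: lev_def)
    then show "a = 0 \<and> b = 0" using cnt_zero[OF sm1, of a] cnt_zero[OF sm2, of b] u1 v1 p1 p2 by auto
  qed
  then show ?thesis using lev00 by auto
qed

end

context setting begin

definition PQ :: "nat \<Rightarrow> (nat \<times> nat) set" where
  "PQ k = (\<Union>i \<in> {1..w1}. \<Union>j \<in> {1..w2}. if i + j = k then
            {(u i, b) | b. b \<in> S2 \<and> v j < b \<and> (j < w2 \<longrightarrow> b \<le> v (j + 1))}
            \<union> {(a, v j) | a. a \<in> S1 \<and> u i < a \<and> (i < w1 \<longrightarrow> a \<le> u (i + 1))}
          else {})"

lemma inPQ1: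
  "i \<in> {1..w1} \<Longrightarrow> j \<in> {1..w2} \<Longrightarrow> i + j = k \<Longrightarrow> b \<in> S2 \<Longrightarrow> v j < b \<Longrightarrow>
   (j < w2 \<longrightarrow> b \<le> v (j + 1)) \<Longrightarrow> (u i, b) \<in> PQ k"
proof -
  assume h: "i \<in> {1..w1}" "j \<in> {1..w2}" "i + j = k"
  assume h2: "b \<in> S2" "v j < b" "j < w2 \<longrightarrow> b \<le> v (j + 1)"
  have "(u i, b) \<in> {(u i, b) | b. b \<in> S2 \<and> v j < b \<and> (j < w2 \<longrightarrow> b \<le> v (j + 1))}
            \<union> {(a, v j) | a. a \<in> S1 \<and> u i < a \<and> (i < w1 \<longrightarrow> a \<le> u (i + 1))}"
    using h2 by blast
  then show ?thesis unfolding PQ_def using h by (intro UN_I[OF h(1)] UN_I[OF h(2)]) (simp only: h(3) refl if_True)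
qed

lemma inPQ2:
  "i \<in> {1..w1} \<Longrightarrow> j \<in> {1..w2} \<Longrightarrow> i + j = k \<Longrightarrow> a \<in> S1 \<Longrightarrow> u i < a \<Longrightarrow>
   (i < w1 \<longrightarrow> a \<le> u (i + 1)) \<Longrightarrow> (a, v j) \<in> PQ k"
proof -
  assume h: "i \<in> {1..w1}" "j \<in> {1..w2}" "i + j = k"
  assume h2: "a \<in> S1" "u i < a" "i < w1 \<longrightarrow> a \<le> u (i + 1)"
  have "(a, v j) \<in> {(u i, b) | b. b \<in> S2 \<and> v j < b \<and> (j < w2 \<longrightarrow> b \<le> v (j + 1))}
            \<union> {(a, v j) | a. a \<in> S1 \<and> u i < a \<and> (i < w1 \<longrightarrow> a \<le> u (i + 1))}"
    using h2 by blast
  then show ?thesis unfolding PQ_def using h by (intro UN_I[OF h(1)] UN_I[OF h(2)]) (simp only: h(3) refl if_True)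
qed

lemma level_set:
  assumes k: "2 \<le> k" shows "{x \<in> A. lev x = k} = PQ k"
proof
  show "{x \<in> A. lev x = k} \<subseteq> PQ k"
  proof
    fix x assume x: "x \<in> {x \<in> A. lev x = k}"
    obtain a b where xab: "x = (a, b)" by (cases x)
    have aS: "a \<in> S1" "b \<in> S2" and e: "a \<in> U \<or> b \<in> V" using x xab A_char by auto
    have lv: "1 + cnt u w1 a + cnt v w2 b = k" using x xab by (simp add: lev_def)
    show "x \<in> PQ k"
    proof (cases "a \<in> U")
      case True
      then obtain i where i: "i \<in> {1..w1}" "a = u i" by auto
      have ci: "cnt u w1 a = i - 1" using cnt_G2[OF sm1 i(1)] i by simp
      show ?thesis
      proof (cases "cnt v w2 b \<ge> 1")
        case True
        note g = cnt_G6[OF sm2 True]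
        have "(u i, b) \<in> PQ k"
          by (rule inPQ1[of i "cnt v w2 b"]) (use i g lv ci aS in auto)
        then show ?thesis using xab i by simp
      next
        case False
        then have b0: "b = 0" using cnt_zero[OF sm2, of b] v1 p2 by simp
        have "i \<ge> 2" using lv ci False k i by auto
        have uu: "u (i - 1) < u i" 
          by (rule strict_mono_onD[OF sm1]) (use i \<open>i \<ge> 2\<close> in auto)
        have "(a, v 1) \<in> PQ k"
          by (rule inPQ2[of "i - 1" 1]) (use i lv ci False \<open>i \<ge> 2\<close> aS uu p2 in auto)
        then show ?thesis using xab b0 v1 by simp
      qed
    next
      case False
      then have bV: "b \<in> V" using e by simp
      then obtain j where j: "j \<in> {1..w2}" "b = v j" by auto
      have cj: "cnt v w2 b = j - 1" using cnt_G2[OF sm2 j(1)] j by simp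
      have "cnt u w1 a \<ge> 1"
      proof (rule ccontr)
        assume "\<not> 1 \<le> cnt u w1 a"
        then have "a = 0" using cnt_zero[OF sm1, of a] u1 p1 by simp
        then show False using False U0 by simp
      qed
      note g = cnt_G6[OF sm1 this]
      have "(a, v j) \<in> PQ k"
        by (rule inPQ2[of "cnt u w1 a" j]) (use j g lv cj aS in auto)
      then show ?thesis using xab j by simp
    qed
  qed
next
  show "PQ k \<subseteq> {x \<in> A. lev x = k}"
  proof
    fix x assume "x \<in> PQ k"
    then obtain i j where ij: "i \<in> {1..w1}" "j \<in> {1..w2}" "i + j = k"
      and xx: "x \<in> {(u i, b) | b. b \<in> S2 \<and> v j < b \<and> (j < w2 \<longrightarrow> b \<le> v (j + 1))}
            \<union> {(a, v j) | a. a \<in> S1 \<and> u i < a \<and> (i < w1 \<longrightarrow> a \<le> u (i + 1))}"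
    proof -
      from \<open>x \<in> PQ k\<close> obtain i j where ij0: "i \<in> {1..w1}" "j \<in> {1..w2}"
        and xin: "x \<in> (if i + j = k then
            {(u i, b) | b. b \<in> S2 \<and> v j < b \<and> (j < w2 \<longrightarrow> b \<le> v (j + 1))}
            \<union> {(a, v j) | a. a \<in> S1 \<and> u i < a \<and> (i < w1 \<longrightarrow> a \<le> u (i + 1))}
          else {})" unfolding PQ_def by blast
      have ijk: "i + j = k"
      proof (rule ccontr)
        assume "i + j \<noteq> k"
        then have "x \<in> {}" using xin by (simp only: if_False)
        then show False by simp
      qed
      have "x \<in> {(u i, b) | b. b \<in> S2 \<and> v j < b \<and> (j < w2 \<longrightarrow> b \<le> v (j + 1))}
            \<union> {(a, v j) | a. a \<in> S1 \<and> u i < a \<and> (i < w1 \<longrightarrow> a \<le> u (i + 1))}"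
        using xin ijk by (simp only: refl if_True)
      then show ?thesis by (rule that[OF ij0 ijk])
    qed
    from xx show "x \<in> {x \<in> A. lev x = k}"
    proof
      assume "x \<in> {(u i, b) | b. b \<in> S2 \<and> v j < b \<and> (j < w2 \<longrightarrow> b \<le> v (j + 1))}"
      then obtain b where b: "x = (u i, b)" "b \<in> S2" "v j < b" "j < w2 \<longrightarrow> b \<le> v (j + 1)" by blast
      have "cnt v w2 b = j" using cnt_G1[OF sm2 ij(2)] b by blast
      moreover have "cnt u w1 (u i) = i - 1" using cnt_G2[OF sm1 ij(1)] .
      moreover have "(u i, b) \<in> A" using A_char b US1 ij by auto
      ultimately show ?thesis using b ij by (auto simp: lev_def)
    next
      assume "x \<in> {(a, v j) | a. a \<in> S1 \<and> u i < a \<and> (i < w1 \<longrightarrow> a \<le> u (i + 1))}"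
      then obtain a where a: "x = (a, v j)" "a \<in> S1" "u i < a" "i < w1 \<longrightarrow> a \<le> u (i + 1)" by blast
      have "cnt u w1 a = i" using cnt_G1[OF sm1 ij(1)] a by blast
      moreover have "cnt v w2 (v j) = j - 1" using cnt_G2[OF sm2 ij(2)] .
      moreover have "(a, v j) \<in> A" using A_char a VS2 ij by auto
      ultimately show ?thesis using a ij by (auto simp: lev_def)
    qed
  qed
qed

end

theorem corollary4p5:
  fixes S1 S2 :: "nat set" and w1 w2 :: nat and u v :: "nat \<Rightarrow> nat"
  assumes "numerical_semigroup S1" and "numerical_semigroup S2"
    and "w1 \<in> S1" and "w2 \<in> S2" and "w1 > 0" and "w2 > 0"
    and "strict_mono_on {1..w1} u" and "u ` {1..w1} = apery S1 w1"
    and "strict_mono_on {1..w2} v" and "v ` {1..w2} = apery S2 w2"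
  shows "rem (S1 \<times> S2) (apery2 (S1 \<times> S2) (w1, w2)) (w1 + w2) = {}
    \<and> (\<forall>n < w1 + w2. rem (S1 \<times> S2) (apery2 (S1 \<times> S2) (w1, w2)) n \<noteq> {})
    \<and> Dlev (S1 \<times> S2) (apery2 (S1 \<times> S2) (w1, w2)) (w1 + w2 - 1) = {(0, 0)}
    \<and> (\<forall>k \<in> {2..w1 + w2}.
         Dlev (S1 \<times> S2) (apery2 (S1 \<times> S2) (w1, w2)) (w1 + w2 - k) =
         (\<Union>i \<in> {1..w1}. \<Union>j \<in> {1..w2}. if i + j = k then
            {(u i, b) | b. b \<in> S2 \<and> v j < b \<and> (j < w2 \<longrightarrow> b \<le> v (j + 1))}
            \<union> {(a, v j) | a. a \<in> S1 \<and> u i < a \<and> (i < w1 \<longrightarrow> a \<le> u (i + 1))}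
          else {}))"
proof -
  interpret setting S1 S2 w1 w2 u v
    using assms by (unfold_locales) auto
  have r1: "rem SS A (w1 + w2) = {}"
    using rem_eq[of "w1 + w2"] by (auto simp: L_def lev_def)
  have r2: "\<forall>n < w1 + w2. rem SS A n \<noteq> {}"
  proof (intro allI impI)
    fix n assume "n < w1 + w2"
    then have "(0, 0) \<in> rem SS A n" using rem_eq[of n] lev00 by (auto simp: L_def)
    then show "rem SS A n \<noteq> {}" by blast
  qed
  have r3: "Dlev SS A (w1 + w2 - 1) = {(0, 0)}"
  proof -
    have "Dlev SS A (w1 + w2 - 1) = Dset SS (L 1)"
      using rem_eq[of "w1 + w2 - 1"] p1 by (simp add: Dlev_def)
    also have "\<dots> = {(0, 0)}" using Dset_eq[of 1] lev1 p1 by simp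
    finally show ?thesis .
  qed
  have r4: "\<forall>k \<in> {2..w1 + w2}. Dlev SS A (w1 + w2 - k) = PQ k"
  proof
    fix k assume k: "k \<in> {2..w1 + w2}"
    have "Dlev SS A (w1 + w2 - k) = Dset SS (L k)"
      using rem_eq[of "w1 + w2 - k"] k by (simp add: Dlev_def)
    also have "\<dots> = PQ k" using Dset_eq[of k] level_set[of k] k by simp
    finally show "Dlev SS A (w1 + w2 - k) = PQ k" .
  qed
  note r4' = r4[unfolded PQ_def]
  show ?thesis by (intro conjI r1 r2 r3 r4')
qed

end
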